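(* Let $n\ge2$ and let $M\subset\mathbb{C}^n\times\mathbb{R}$ be given by $$s=\sum_{j=1}^a|z_j|^2-\sum_{j=a+1}^{a+b}|z_j|^2+B(z,z)+\overline{B(z,z)}=Q(z,\bar z),$$ where $a\ge2$, $a+b\le n$, $B$ is a complex bilinear form, and the real quadratic form $Q$ is nondegenerate. Write $A(z,\bar z)=\sum_{j=1}^a|z_j|^2-\sum_{j=a+1}^{a+b}|z_j|^2$. Suppose $f(z,\bar z)$ is a polynomial such that, considered as a function on $M$ parametrized by $z$, $f$ is a CR function on $M_{CR}$. Then there exists a polynomial $F(z,s)$ such that $$f(z,\bar z)=F\big(z,A(z,\bar z)+B(z,z)+\overline{B(z,z)}\big).$$ Furthermore, if $f$ is homogeneous of degree $d$, then $F$ is weighted homogeneous of degree $d$, i.e. $F(z,s)=\sum_{j+2k=d}P_j(z)s^k$ with each $P_j$ a homogeneous polynomial of degree $j$.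
   Context: $M_{CR}$ is the set of points $p\in M$ where $\dim_{\mathbb{C}}\big((\mathbb{C}\otimes T_pM)\cap\operatorname{span}\{\partial/\partial\bar z_1,\dots,\partial/\partial\bar z_n\}\big)=n-1$; $f$ is CR on $M_{CR}$ if it is annihilated by all vector fields on $M_{CR}$ with values in this space. *)

theory Defs
  imports "HOL-Analysis.Analysis"
begin

text \<open>Points of C^n are vectors z :: complex^'n, the index type 'n having CARD('n) = n elements.\<close>

definition vconj :: "complex^'n \<Rightarrow> complex^'n" where
  "vconj z = (\<chi> j. cnj (z $ j))"

definition mono :: "('n::finite \<Rightarrow> nat) \<Rightarrow> complex^'n \<Rightarrow> complex" where
  "mono \<alpha> z = (\<Prod>j\<in>UNIV. (z $ j) ^ (\<alpha> j))"

definition mdeg :: "('n::finite \<Rightarrow> nat) \<Rightarrow> nat" where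
  "mdeg \<alpha> = (\<Sum>j\<in>UNIV. \<alpha> j)"

definition poly_zzbar :: "(complex^'n::finite \<Rightarrow> complex) \<Rightarrow> bool" where
  "poly_zzbar f \<longleftrightarrow> (\<exists>S c. finite S \<and>
     (\<forall>z. f z = (\<Sum>(\<alpha>,\<beta>)\<in>S. c (\<alpha>,\<beta>) * mono \<alpha> z * mono \<beta> (vconj z))))"

definition homog_poly_zzbar :: "(complex^'n::finite \<Rightarrow> complex) \<Rightarrow> nat \<Rightarrow> bool" where
  "homog_poly_zzbar f d \<longleftrightarrow> (\<exists>S c. finite S \<and> (\<forall>(\<alpha>,\<beta>)\<in>S. mdeg \<alpha> + mdeg \<beta> = d) \<and>
     (\<forall>z. f z = (\<Sum>(\<alpha>,\<beta>)\<in>S. c (\<alpha>,\<beta>) * mono \<alpha> z * mono \<beta> (vconj z))))"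

definition poly_zs :: "(complex^'n::finite \<Rightarrow> complex \<Rightarrow> complex) \<Rightarrow> bool" where
  "poly_zs F \<longleftrightarrow> (\<exists>S c. finite S \<and>
     (\<forall>z s. F z s = (\<Sum>(\<alpha>,k)\<in>S. c (\<alpha>,k) * mono \<alpha> z * s ^ k)))"

definition whomog_poly_zs :: "(complex^'n::finite \<Rightarrow> complex \<Rightarrow> complex) \<Rightarrow> nat \<Rightarrow> bool" where
  "whomog_poly_zs F d \<longleftrightarrow> (\<exists>S c. finite S \<and> (\<forall>(\<alpha>,k)\<in>S. mdeg \<alpha> + 2 * k = d) \<and>
     (\<forall>z s. F z s = (\<Sum>(\<alpha>,k)\<in>S. c (\<alpha>,k) * mono \<alpha> z * s ^ k)))"

definition wirt_dbar :: "(complex^'n::finite \<Rightarrow> complex) \<Rightarrow> 'n \<Rightarrow> complex^'n \<Rightarrow> complex" where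
  "wirt_dbar f j z = (let D = frechet_derivative f (at z)
                      in (D (axis j 1) + \<i> * D (axis j \<i>)) / 2)"

text \<open>A(z, conj z) with positive indices Pos (a of them) and negative indices Neg (b of them).\<close>
definition herm_form :: "'n set \<Rightarrow> 'n set \<Rightarrow> complex^'n::finite \<Rightarrow> real" where
  "herm_form Pos Neg z = (\<Sum>j\<in>Pos. (cmod (z $ j))^2) - (\<Sum>j\<in>Neg. (cmod (z $ j))^2)"

definition bilin :: "complex^'n^'n \<Rightarrow> complex^'n::finite \<Rightarrow> complex" where
  "bilin b z = (\<Sum>j\<in>UNIV. \<Sum>k\<in>UNIV. b $ j $ k * z $ j * z $ k)"

definition Qform :: "'n set \<Rightarrow> 'n set \<Rightarrow> complex^'n^'n \<Rightarrow> complex^'n::finite \<Rightarrow> real" where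
  "Qform Pos Neg b z = Re (complex_of_real (herm_form Pos Neg z) + bilin b z + cnj (bilin b z))"

definition nondegenerate_qf :: "(complex^'n::finite \<Rightarrow> real) \<Rightarrow> bool" where
  "nondegenerate_qf Q \<longleftrightarrow>
     (\<forall>w. (\<forall>v. (Q (v + w) - Q v - Q w) / 2 = 0) \<longrightarrow> w = 0)"

text \<open>(0,1)-vectors tangent to M = {(z,s). s = Q z} at the point over z, in the z-parametrisation:
  sum a_j (d/d conj z_j + dQ/d conj z_j d/ds) with sum a_j dQ/d conj z_j = 0.\<close>
definition CR_space :: "(complex^'n::finite \<Rightarrow> real) \<Rightarrow> complex^'n \<Rightarrow> (complex^'n) set" where
  "CR_space Q z = {a. (\<Sum>j\<in>UNIV. a $ j * wirt_dbar (\<lambda>u. complex_of_real (Q u)) j z) = 0}"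

text \<open>M_CR: complex dimension of the CR space is n-1 (real dimension 2(n-1)).\<close>
definition M_CR :: "(complex^'n::finite \<Rightarrow> real) \<Rightarrow> (complex^'n) set" where
  "M_CR Q = {z. dim (CR_space Q z) = 2 * (CARD('n) - 1)}"

definition is_CR_on_MCR :: "(complex^'n::finite \<Rightarrow> real) \<Rightarrow> (complex^'n \<Rightarrow> complex) \<Rightarrow> bool" where
  "is_CR_on_MCR Q f \<longleftrightarrow>
     (\<forall>z\<in>M_CR Q. \<forall>a\<in>CR_space Q z. (\<Sum>j\<in>UNIV. a $ j * wirt_dbar f j z) = 0)"

end

theory Submission
  imports Defs "HOL-Complex_Analysis.Complex_Analysis"
begin

definition cvec :: "complex \<Rightarrow> complex^'n \<Rightarrow> complex^'n" where
  "cvec t u = (\<chi> k. t * u $ k)"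

lemma cvec_nth[simp]: "cvec t u $ k = t * u $ k"
  by (simp add: cvec_def)
lemma cvec_0[simp]: "cvec 0 u = 0"
  by (simp add: vec_eq_iff)
lemma cvec_add: "cvec (a+b) u = cvec a u + cvec b u"
  by (simp add: vec_eq_iff algebra_simps)

inductive pp :: "(complex^'n::finite \<Rightarrow> complex^'n \<Rightarrow> complex) \<Rightarrow> nat \<Rightarrow> bool" where
  pp_const: "pp (\<lambda>z w. c) 0"
| pp_z: "pp (\<lambda>z w. z $ j) 1"
| pp_w: "pp (\<lambda>z w. w $ j) 1"
| pp_add: "pp P d \<Longrightarrow> pp Q d \<Longrightarrow> pp (\<lambda>z w. P z w + Q z w) d"
| pp_mult: "pp P d \<Longrightarrow> pp Q e \<Longrightarrow> pp (\<lambda>z w. P z w * Q z w) (d + e)"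
| pp_mono: "pp P d \<Longrightarrow> d \<le> e \<Longrightarrow> pp P e"

lemma pp_holo:
  assumes "pp P d" shows "(\<lambda>t. P (z + cvec t u) (w + cvec t v)) field_differentiable (at t0)"
  using assms
proof (induction arbitrary: z w rule: pp.induct)
  case (pp_add P d Q)
  then show ?case by (intro field_differentiable_add) auto
next
  case (pp_mult P d Q e)
  then show ?case by (intro field_differentiable_mult) auto
qed (auto intro!: field_differentiable_add field_differentiable_mult
       field_differentiable_const field_differentiable_ident)

definition DD :: "(complex^'n::finite \<Rightarrow> complex^'n \<Rightarrow> complex) \<Rightarrow> complex^'n \<Rightarrow> complex^'n \<Rightarrow> complex^'n \<Rightarrow> complex^'n \<Rightarrow> complex" where
  "DD P z w u v = deriv (\<lambda>t. P (z + cvec t u) (w + cvec t v)) 0"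

lemma pp_DD_has:
  assumes "pp P d" shows "((\<lambda>t. P (z + cvec t u) (w + cvec t v)) has_field_derivative DD P z w u v) (at 0)"
  unfolding DD_def using pp_holo[OF assms] DERIV_deriv_iff_field_differentiable by blast

lemma pp_DD_has_at:
  assumes "pp P d" shows "((\<lambda>t. P (z + cvec t u) (w + cvec t v)) has_field_derivative
       DD P (z + cvec t0 u) (w + cvec t0 v) u v) (at t0)"
proof -
  have "((\<lambda>s. P ((z + cvec t0 u) + cvec s u) ((w + cvec t0 v) + cvec s v)) has_field_derivative
       DD P (z + cvec t0 u) (w + cvec t0 v) u v) (at 0)" by (rule pp_DD_has[OF assms])
  then have "((\<lambda>s. P (z + cvec (s + t0) u) (w + cvec (s + t0) v)) has_field_derivative
       DD P (z + cvec t0 u) (w + cvec t0 v) u v) (at 0)"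
    by (simp add: cvec_add add_ac)
  then show ?thesis using DERIV_shift[where x=0 and z=t0] by simp
qed

lemma DD_const[simp]: "DD (\<lambda>z w. c) z w u v = 0"
  by (simp add: DD_def)

lemma DD_z[simp]: "DD (\<lambda>z w. z $ j) z w u v = u $ j"
  unfolding DD_def by (rule DERIV_imp_deriv) (auto intro!: derivative_eq_intros)

lemma DD_w[simp]: "DD (\<lambda>z w. w $ j) z w u v = v $ j"
  unfolding DD_def by (rule DERIV_imp_deriv) (auto intro!: derivative_eq_intros)

lemma DD_add:
  assumes "pp P d" "pp Q e"
  shows "DD (\<lambda>z w. P z w + Q z w) z w u v = DD P z w u v + DD Q z w u v"
  unfolding DD_def[of "\<lambda>z w. P z w + Q z w"]
  by (rule DERIV_imp_deriv, rule DERIV_add[OF pp_DD_has[OF assms(1)] pp_DD_has[OF assms(2)]])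

lemma DD_mult:
  assumes "pp P d" "pp Q e"
  shows "DD (\<lambda>z w. P z w * Q z w) z w u v = DD P z w u v * Q z w + P z w * DD Q z w u v"
proof -
  have "((\<lambda>t. P (z + cvec t u) (w + cvec t v) * Q (z + cvec t u) (w + cvec t v)) has_field_derivative
     DD P z w u v * Q z w + P z w * DD Q z w u v) (at 0)"
    using DERIV_mult'[OF pp_DD_has[OF assms(1), where z=z and u=u and w=w and v=v]
        pp_DD_has[OF assms(2), where z=z and u=u and w=w and v=v]] by (simp add: add.commute)
  then show ?thesis unfolding DD_def[of "\<lambda>z w. P z w * Q z w"] by (rule DERIV_imp_deriv)
qed

lemma pp_eq: "pp P d \<Longrightarrow> (\<And>z w. P z w = Q z w) \<Longrightarrow> pp Q d"
proof -
  assume "pp P d" "\<And>z w. P z w = Q z w"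
  then have "P = Q" by (intro ext)
  with \<open>pp P d\<close> show ?thesis by simp
qed

lemma pp_cmult: "pp P d \<Longrightarrow> pp (\<lambda>z w. c * P z w) d"
  using pp_mult[OF pp_const, of P d c] by simp

lemma pp_neg: "pp P d \<Longrightarrow> pp (\<lambda>z w. - P z w) d"
  by (rule pp_eq[OF pp_cmult[of P d "-1"]]) auto

lemma pp_diff: "pp P d \<Longrightarrow> pp Q d \<Longrightarrow> pp (\<lambda>z w. P z w - Q z w) d"
  by (rule pp_eq[OF pp_add[OF _ pp_neg]]) auto

lemma pp_const': "pp (\<lambda>z w. c) d"
  by (rule pp_mono[OF pp_const]) simp

lemma pp_sum: "finite S \<Longrightarrow> (\<And>x. x \<in> S \<Longrightarrow> pp (P x) d) \<Longrightarrow> pp (\<lambda>z w. \<Sum>x\<in>S. P x z w) d"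
proof (induction S rule: finite_induct)
  case empty
  then show ?case using pp_const' by simp
next
  case (insert x F)
  then show ?case using pp_add[of "P x" d "\<lambda>z w. \<Sum>x\<in>F. P x z w"] by simp
qed

lemma pp_0_const: "pp P d \<Longrightarrow> d = 0 \<Longrightarrow> \<exists>c. P = (\<lambda>z w. c)"
proof (induction rule: pp.induct)
  case (pp_add P d Q)
  then obtain c1 c2 where "P = (\<lambda>z w. c1)" "Q = (\<lambda>z w. c2)" by auto
  then show ?case by auto
next
  case (pp_mult P d Q e)
  then obtain c1 c2 where "P = (\<lambda>z w. c1)" "Q = (\<lambda>z w. c2)" by auto
  then show ?case by auto
qed auto

lemma DD_pp: "pp P d \<Longrightarrow> pp (\<lambda>z w. DD P z w u v) (d - 1)"
proof (induction rule: pp.induct)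
  case (pp_const c)
  then show ?case using pp.pp_const[of 0] by simp
next
  case (pp_z j)
  then show ?case using pp.pp_const[of "u $ j"] by simp
next
  case (pp_w j)
  then show ?case using pp.pp_const[of "v $ j"] by simp
next
  case (pp_add P d Q)
  then show ?case by (intro pp_eq[OF pp.pp_add[OF pp_add.IH]]) (simp add: DD_add)
next
  case (pp_mult P d Q e)
  have eq: "DD (\<lambda>z w. P z w * Q z w) z w u v = DD P z w u v * Q z w + P z w * DD Q z w u v" for z w
    by (rule DD_mult[OF pp_mult.hyps])
  consider "d = 0" | "e = 0" | "d > 0" "e > 0" by auto
  then show ?case
  proof cases
    case 1
    then obtain c where P: "P = (\<lambda>z w. c)" using pp_0_const pp_mult.hyps by blast
    have "pp (\<lambda>z w. c * DD Q z w u v) (d + e - 1)" using pp_cmult[OF pp_mult.IH(2), of c] 1 by simp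
    then show ?thesis
      by (rule pp_eq) (simp only: eq, simp add: P)
  next
    case 2
    then obtain c where Q: "Q = (\<lambda>z w. c)" using pp_0_const pp_mult.hyps by blast
    have "pp (\<lambda>z w. c * DD P z w u v) (d + e - 1)" using pp_cmult[OF pp_mult.IH(1), of c] 2 by simp
    then show ?thesis
      by (rule pp_eq) (simp only: eq, simp add: Q mult.commute)
  next
    case 3
    have a: "pp (\<lambda>z w. DD P z w u v * Q z w) (d + e - 1)"
      using pp.pp_mult[OF pp_mult.IH(1) pp_mult.hyps(2)] 3 by (auto elim: pp_mono)
    have b: "pp (\<lambda>z w. P z w * DD Q z w u v) (d + e - 1)"
      using pp.pp_mult[OF pp_mult.hyps(1) pp_mult.IH(2)] 3 by (auto elim: pp_mono)
    show ?thesis by (rule pp_eq[OF pp.pp_add[OF a b]]) (simp add: eq)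
  qed
next
  case (pp_mono P d e)
  then show ?case by (auto elim: pp.pp_mono)
qed

lemma DD_sym: "pp P d \<Longrightarrow> DD (\<lambda>z w. DD P z w u v) z w u' v' = DD (\<lambda>z w. DD P z w u' v') z w u v"
proof (induction arbitrary: z w rule: pp.induct)
  case (pp_add P d Q)
  have e1: "(\<lambda>z w. DD (\<lambda>z w. P z w + Q z w) z w a b) = (\<lambda>z w. DD P z w a b + DD Q z w a b)" for a b
    using DD_add[OF pp_add.hyps] by (intro ext) simp
  show ?case unfolding e1 using pp_add.IH
    by (simp add: DD_add[OF DD_pp[OF pp_add.hyps(1)] DD_pp[OF pp_add.hyps(2)]])
next
  case (pp_mult P d Q e)
  have e1: "(\<lambda>z w. DD (\<lambda>z w. P z w * Q z w) z w a b) = (\<lambda>z w. DD P z w a b * Q z w + P z w * DD Q z w a b)" for a b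
    using DD_mult[OF pp_mult.hyps] by (intro ext) simp
  have X: "DD (\<lambda>z w. DD P z w a b * Q z w + P z w * DD Q z w a b) z w a' b' =
     DD (\<lambda>z w. DD P z w a b) z w a' b' * Q z w + DD P z w a b * DD Q z w a' b' +
     (DD P z w a' b' * DD Q z w a b + P z w * DD (\<lambda>z w. DD Q z w a b) z w a' b')" for a b a' b'
    by (simp add: DD_add[OF pp.pp_mult[OF DD_pp[OF pp_mult.hyps(1)] pp_mult.hyps(2)]
                  pp.pp_mult[OF pp_mult.hyps(1) DD_pp[OF pp_mult.hyps(2)]]]
                  DD_mult[OF DD_pp[OF pp_mult.hyps(1)] pp_mult.hyps(2)]
                  DD_mult[OF pp_mult.hyps(1) DD_pp[OF pp_mult.hyps(2)]])
  show ?case unfolding e1 X using pp_mult.IH by (simp add: algebra_simps)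
qed simp_all

lemma axis_sum_l: "(\<Sum>k\<in>UNIV. u $ k * (axis k (1::complex) $ j)) = u $ j"
  by (simp add: axis_def if_distrib cong: if_cong)

lemma DD_lin: "pp P d \<Longrightarrow> DD P z w u v =
   (\<Sum>k\<in>UNIV. u $ k * DD P z w (axis k 1) 0 + v $ k * DD P z w 0 (axis k 1))"
proof (induction arbitrary: z w rule: pp.induct)
  case (pp_z j)
  then show ?case by (simp add: axis_sum_l)
next
  case (pp_w j)
  then show ?case by (simp add: axis_sum_l)
next
  case (pp_add P d Q)
  then show ?case by (simp add: DD_add sum.distrib algebra_simps)
next
  case (pp_mult P d Q e)
  then show ?case by (simp add: DD_mult sum.distrib sum_distrib_left sum_distrib_right algebra_simps)
qed simp_all

definition vupd :: "complex^'n \<Rightarrow> 'n \<Rightarrow> complex \<Rightarrow> complex^'n" where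
  "vupd z p a = (\<chi> k. if k = p then a else z $ k)"

lemma vupd_nth[simp]: "vupd z p a $ k = (if k = p then a else z $ k)"
  by (simp add: vupd_def)

lemma pp_subst:
  assumes L: "pp (\<lambda>z w. L w) 1"
  shows "pp P d \<Longrightarrow> pp (\<lambda>z w. P (vupd z p (L w)) w) d"
proof (induction rule: pp.induct)
  case (pp_z j)
  show ?case
  proof (cases "j = p")
    case True
    show ?thesis by (rule pp_eq[OF L]) (simp add: True)
  next
    case False
    show ?thesis by (rule pp_eq[OF pp.pp_z[of j]]) (simp add: False)
  qed
next
  case (pp_add P d Q)
  then show ?case by (auto intro: pp.pp_add)
next
  case (pp_mult P d Q e)
  then show ?case by (auto intro: pp.pp_mult)
next
  case (pp_mono P d e)
  then show ?case by (auto intro: pp.pp_mono)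
next
  case (pp_w j)
  show ?case by (rule pp.pp_w)
qed (rule pp.pp_const)

lemma pp_div:
  assumes L: "pp (\<lambda>z w. L w) 1"
  shows "pp P d \<Longrightarrow> \<exists>h. pp h (d - 1) \<and> (\<forall>z w. P z w - P (vupd z p (L w)) w = (z $ p - L w) * h z w)"
proof (induction rule: pp.induct)
  case (pp_const c)
  then show ?case by (intro exI[of _ "\<lambda>z w. 0"]) (auto intro: pp.pp_const)
next
  case (pp_z j)
  show ?case
  proof (cases "j = p")
    case True
    then show ?thesis by (intro exI[of _ "\<lambda>z w. 1"]) (auto intro: pp.pp_const)
  next
    case False
    then show ?thesis by (intro exI[of _ "\<lambda>z w. 0"]) (auto intro: pp.pp_const)
  qed
next
  case (pp_w j)
  then show ?case by (intro exI[of _ "\<lambda>z w. 0"]) (auto intro: pp.pp_const)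
next
  case (pp_add P d Q)
  then obtain h1 h2 where "pp h1 (d - 1)" "\<forall>z w. P z w - P (vupd z p (L w)) w = (z $ p - L w) * h1 z w"
     "pp h2 (d - 1)" "\<forall>z w. Q z w - Q (vupd z p (L w)) w = (z $ p - L w) * h2 z w" by blast
  then show ?case
    by (intro exI[of _ "\<lambda>z w. h1 z w + h2 z w"] conjI pp.pp_add) (auto simp: algebra_simps)
next
  case (pp_mult P d Q e)
  obtain h1 where h1: "pp h1 (d - 1)" "\<And>z w. P z w - P (vupd z p (L w)) w = (z $ p - L w) * h1 z w"
    using pp_mult.IH by blast
  obtain h2 where h2: "pp h2 (e - 1)" "\<And>z w. Q z w - Q (vupd z p (L w)) w = (z $ p - L w) * h2 z w"
    using pp_mult.IH by blast
  consider "d = 0" | "e = 0" | "d > 0" "e > 0" by auto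
  then show ?case
  proof cases
    case 1
    then obtain c where P: "P = (\<lambda>z w. c)" using pp_0_const pp_mult.hyps by blast
    show ?thesis
      apply (intro exI[of _ "\<lambda>z w. c * h2 z w"] conjI)
      using pp_cmult[OF h2(1)] 1 apply simp
      by (simp add: P flip: right_diff_distrib h2(2))
  next
    case 2
    then obtain c where Q: "Q = (\<lambda>z w. c)" using pp_0_const pp_mult.hyps by blast
    show ?thesis
      apply (intro exI[of _ "\<lambda>z w. c * h1 z w"] conjI)
      using pp_cmult[OF h1(1)] 2 apply simp
      by (simp add: Q flip: left_diff_distrib h1(2))
  next
    case 3
    have a: "pp (\<lambda>z w. h1 z w * Q z w) (d + e - 1)"
      using pp.pp_mult[OF h1(1) pp_mult.hyps(2)] 3 by (auto elim: pp_mono)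
    have b: "pp (\<lambda>z w. P (vupd z p (L w)) w * h2 z w) (d + e - 1)"
      using pp.pp_mult[OF pp_subst[OF L pp_mult.hyps(1)] h2(1)] 3 by (auto elim: pp_mono)
    have "P z w * Q z w - P (vupd z p (L w)) w * Q (vupd z p (L w)) w =
       (z $ p - L w) * (h1 z w * Q z w + P (vupd z p (L w)) w * h2 z w)" for z w
    proof -
      have "P z w * Q z w - P (vupd z p (L w)) w * Q (vupd z p (L w)) w =
        (P z w - P (vupd z p (L w)) w) * Q z w + P (vupd z p (L w)) w * (Q z w - Q (vupd z p (L w)) w)"
        by (simp add: algebra_simps)
      then show ?thesis by (simp add: h1(2) h2(2) algebra_simps)
    qed
    then show ?thesis using pp.pp_add[OF a b] by blast
  qed
next
  case (pp_mono P d e)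
  then show ?case by (meson diff_le_mono pp.pp_mono)
qed

lemma pp_cont:
  assumes "pp P d" shows "isCont (\<lambda>t. P (z + cvec t u) (w + cvec t v)) a"
  using pp_holo[OF assms] field_differentiable_imp_continuous_at by blast

lemma pp_dens:
  assumes "pp P d" and Z: "\<And>t. t \<noteq> c \<Longrightarrow> P (z + cvec t u) (w + cvec t v) = 0"
  shows "P z w = 0"
proof -
  let ?f = "\<lambda>t. P (z + cvec t u) (w + cvec t v)"
  have "(?f \<longlongrightarrow> ?f 0) (at 0)" using pp_cont[OF assms(1), where z=z and u=u and w=w and v=v and a=0] isCont_def by blast
  moreover have "eventually (\<lambda>t. ?f t = 0) (at 0)"
    using eventually_neq_at_within[of c 0 UNIV] by eventually_elim (use Z in auto)
  then have "(?f \<longlongrightarrow> 0) (at 0)" by (simp add: tendsto_eventually)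
  ultimately have "?f 0 = 0" using tendsto_unique at_neq_bot by blast
  then show ?thesis by simp
qed

lemma entire_real0:
  fixes f :: "complex \<Rightarrow> complex"
  assumes "\<And>t. f field_differentiable (at t)" "\<And>r. r \<in> \<real> \<Longrightarrow> f r = 0"
  shows "f t = 0"
proof (rule analytic_continuation[of f UNIV \<real> 0])
  show "f holomorphic_on UNIV" using assms(1) field_differentiable_at_within holomorphic_on_def by blast
  show "(0::complex) islimpt \<real>"
    unfolding islimpt_approachable
  proof (intro allI impI)
    fix e :: real assume "e > 0"
    show "\<exists>x'::complex\<in>\<real>. x' \<noteq> 0 \<and> dist x' 0 < e"
    proof (rule bexI)
      show "complex_of_real (e/2) \<noteq> 0 \<and> dist (complex_of_real (e/2)) 0 < e"
        using \<open>e > 0\<close> by (simp add: dist_norm)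
    qed simp
  qed
qed (use assms in auto)

lemma vconj_nth[simp]: "vconj z $ k = cnj (z $ k)"
  by (simp add: vconj_def)

lemma polar:
  fixes D :: "complex^'n::finite \<Rightarrow> complex^'n \<Rightarrow> complex"
  assumes D: "pp D d" and H: "\<And>z. D z (vconj z) = 0"
  shows "D z w = 0"
proof -
  define E where "E x y = D (x + cvec \<i> y) (x - cvec \<i> y)" for x y
  have E0: "E x y = 0" if "\<forall>k. x $ k \<in> \<real>" "\<forall>k. y $ k \<in> \<real>" for x y :: "complex^'n"
  proof -
    have "vconj (x + cvec \<i> y) = x - cvec \<i> y"
      using that by (simp add: vec_eq_iff Reals_cnj_iff)
    then show ?thesis using H[of "x + cvec \<i> y"] by (simp add: E_def)
  qed
  have S1: "finite K \<Longrightarrow> \<forall>x y. (\<forall>k. x $ k \<in> \<real>) \<longrightarrow> (\<forall>k. k \<notin> K \<longrightarrow> y $ k \<in> \<real>) \<longrightarrow> E x y = 0" for K :: "'n set"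
  proof (induction K rule: finite_induct)
    case empty
    then show ?case using E0 by auto
  next
    case (insert k K)
    show ?case
    proof (intro allI impI)
      fix x y :: "complex^'n" assume x: "\<forall>k. x $ k \<in> \<real>" and y: "\<forall>m. m \<notin> insert k K \<longrightarrow> y $ m \<in> \<real>"
      define z0 where "z0 = x + cvec \<i> (vupd y k 0)"
      define w0 where "w0 = x - cvec \<i> (vupd y k 0)"
      have eq: "E x (vupd y k t) = D (z0 + cvec t (axis k \<i>)) (w0 + cvec t (axis k (- \<i>)))" for t
        unfolding E_def z0_def w0_def
        by (rule arg_cong2[where f=D]) (simp_all add: vec_eq_iff axis_def)
      have "E x (vupd y k t) = 0" for t
        unfolding eq
      proof (rule entire_real0[where f="\<lambda>t. D (z0 + cvec t (axis k \<i>)) (w0 + cvec t (axis k (- \<i>)))"])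
        show "(\<lambda>t. D (z0 + cvec t (axis k \<i>)) (w0 + cvec t (axis k (- \<i>)))) field_differentiable at t" for t
          by (rule pp_holo[OF D])
        fix r :: complex assume "r \<in> \<real>"
        then show "D (z0 + cvec r (axis k \<i>)) (w0 + cvec r (axis k (- \<i>))) = 0"
          using insert.IH x y unfolding eq[symmetric] by auto
      qed
      moreover have "vupd y k (y $ k) = y" by (simp add: vec_eq_iff)
      ultimately show "E x y = 0" by metis
    qed
  qed
  have S2: "finite K \<Longrightarrow> \<forall>x y. (\<forall>k. k \<notin> K \<longrightarrow> x $ k \<in> \<real>) \<longrightarrow> E x y = 0" for K :: "'n set"
  proof (induction K rule: finite_induct)
    case empty
    then show ?case using S1[of UNIV] by auto
  next
    case (insert k K)
    show ?case
    proof (intro allI impI)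
      fix x y :: "complex^'n" assume x: "\<forall>m. m \<notin> insert k K \<longrightarrow> x $ m \<in> \<real>"
      define z0 where "z0 = vupd x k 0 + cvec \<i> y"
      define w0 where "w0 = vupd x k 0 - cvec \<i> y"
      have eq: "E (vupd x k t) y = D (z0 + cvec t (axis k 1)) (w0 + cvec t (axis k 1))" for t
        unfolding E_def z0_def w0_def
        by (rule arg_cong2[where f=D]) (simp_all add: vec_eq_iff axis_def)
      have "E (vupd x k t) y = 0" for t
        unfolding eq
      proof (rule entire_real0[where f="\<lambda>t. D (z0 + cvec t (axis k 1)) (w0 + cvec t (axis k 1))"])
        show "(\<lambda>t. D (z0 + cvec t (axis k 1)) (w0 + cvec t (axis k 1))) field_differentiable at t" for t
          by (rule pp_holo[OF D])
        fix r :: complex assume "r \<in> \<real>"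
        then show "D (z0 + cvec r (axis k 1)) (w0 + cvec r (axis k 1)) = 0"
          using insert.IH x unfolding eq[symmetric] by auto
      qed
      moreover have "vupd x k (x $ k) = x" by (simp add: vec_eq_iff)
      ultimately show "E x y = 0" by metis
    qed
  qed
  have "E (cvec (1/2) (z + w)) (cvec (1/(2*\<i>)) (z - w)) = 0" using S2[of UNIV] by auto
  moreover have "cvec (1/2) (z + w) + cvec \<i> (cvec (1/(2*\<i>)) (z - w)) = z"
    by (simp add: vec_eq_iff field_simps)
  moreover have "cvec (1/2) (z + w) - cvec \<i> (cvec (1/(2*\<i>)) (z - w)) = w"
    by (simp add: vec_eq_iff field_simps)
  ultimately show ?thesis by (simp add: E_def)
qed

inductive pz :: "(complex^'n::finite \<Rightarrow> complex \<Rightarrow> complex) \<Rightarrow> bool" where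
  pz_const: "pz (\<lambda>z s. c)"
| pz_z: "pz (\<lambda>z s. z $ j)"
| pz_s: "pz (\<lambda>z s. s)"
| pz_add: "pz F \<Longrightarrow> pz G \<Longrightarrow> pz (\<lambda>z s. F z s + G z s)"
| pz_mult: "pz F \<Longrightarrow> pz G \<Longrightarrow> pz (\<lambda>z s. F z s * G z s)"

lemma pz_eq: "pz F \<Longrightarrow> (\<And>z s. F z s = G z s) \<Longrightarrow> pz G"
proof -
  assume "pz F" "\<And>z s. F z s = G z s"
  then have "F = G" by (intro ext)
  with \<open>pz F\<close> show ?thesis by simp
qed

lemma pz_neg: "pz F \<Longrightarrow> pz (\<lambda>z s. - F z s)"
  by (rule pz_eq[OF pz_mult[OF pz_const[of "-1"]]]) auto

lemma pz_diff: "pz F \<Longrightarrow> pz G \<Longrightarrow> pz (\<lambda>z s. F z s - G z s)"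
  by (rule pz_eq[OF pz_add[OF _ pz_neg]]) auto

lemma pz_sum: "finite S \<Longrightarrow> (\<And>x. x \<in> S \<Longrightarrow> pz (F x)) \<Longrightarrow> pz (\<lambda>z s. \<Sum>x\<in>S. F x z s)"
proof (induction S rule: finite_induct)
  case empty
  then show ?case using pz_const[of 0] by simp
next
  case (insert x S)
  then show ?case using pz_add[of "F x" "\<lambda>z s. \<Sum>x\<in>S. F x z s"] by simp
qed

lemma pz_prod: "finite S \<Longrightarrow> (\<And>x. x \<in> S \<Longrightarrow> pz (F x)) \<Longrightarrow> pz (\<lambda>z s. \<Prod>x\<in>S. F x z s)"
proof (induction S rule: finite_induct)
  case empty
  then show ?case using pz_const[of 1] by simp
next
  case (insert x S)
  then show ?case using pz_mult[of "F x" "\<lambda>z s. \<Prod>x\<in>S. F x z s"] by simp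
qed

lemma pz_power: "pz F \<Longrightarrow> pz (\<lambda>z s. F z s ^ n)"
proof (induction n)
  case 0
  then show ?case using pz_const[of 1] by simp
next
  case (Suc n)
  then show ?case using pz_mult[of F "\<lambda>z s. F z s ^ n"] by simp
qed

lemma pz_mono: "pz (\<lambda>z s. mono \<alpha> z)"
  unfolding mono_def by (rule pz_prod) (auto intro: pz_power pz_z)

lemma pz_subst: "pz F \<Longrightarrow> pz (\<lambda>z s. E z) \<Longrightarrow> pz (\<lambda>z s. F z (E z))"
  by (induction rule: pz.induct) (auto intro: pz.intros)

lemma pp_pz0: "pp P d \<Longrightarrow> pz (\<lambda>z s. P z 0)"
  by (induction rule: pp.induct) (auto intro: pz.intros)

lemma pz_pp:
  assumes Qt: "pp Qt 2"
  shows "pz F \<Longrightarrow> \<exists>d. pp (\<lambda>z w. F z (Qt z w)) d"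
proof (induction rule: pz.induct)
  case (pz_const c)
  then show ?case using pp_const by blast
next
  case (pz_z j)
  then show ?case using pp_z by blast
next
  case pz_s
  then show ?case using Qt by blast
next
  case (pz_add F G)
  then obtain d1 d2 where "pp (\<lambda>z w. F z (Qt z w)) d1" "pp (\<lambda>z w. G z (Qt z w)) d2" by blast
  then have "pp (\<lambda>z w. F z (Qt z w)) (max d1 d2)" "pp (\<lambda>z w. G z (Qt z w)) (max d1 d2)"
    by (auto elim: pp_mono)
  then show ?case using pp_add by blast
next
  case (pz_mult F G)
  then obtain d1 d2 where "pp (\<lambda>z w. F z (Qt z w)) d1" "pp (\<lambda>z w. G z (Qt z w)) d2" by blast
  then show ?case using pp_mult by blast
qed

lemma mono_zero[simp]: "mono (\<lambda>_. 0) z = 1"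
  by (simp add: mono_def)

lemma mono_delta: "mono (\<lambda>k. if k = j then 1 else 0) z = z $ j"
proof -
  have "mono (\<lambda>k. if k = j then 1 else 0) z = (\<Prod>k\<in>UNIV. if k = j then z $ k else 1)"
    unfolding mono_def by (rule prod.cong) auto
  also have "\<dots> = z $ j" by (subst prod.delta) auto
  finally show ?thesis .
qed

lemma mono_add: "mono (\<lambda>k. \<alpha> k + \<beta> k) z = mono \<alpha> z * mono \<beta> z"
  unfolding mono_def by (simp add: power_add prod.distrib)

lemma poly_zs_gen:
  fixes T :: "'b set"
  assumes fin: "finite T"
    and F: "\<And>z s. F z s = (\<Sum>x\<in>T. d x * mono (\<phi> x) z * s ^ (\<psi> x))"
  shows "poly_zs F"
proof -
  define g where "g x = (\<phi> x, \<psi> x)" for x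
  define c where "c y = (\<Sum>x\<in>{x\<in>T. g x = y}. d x)" for y
  have "F z s = (\<Sum>(\<alpha>,k)\<in>g ` T. c (\<alpha>,k) * mono \<alpha> z * s ^ k)" for z s
  proof -
    have "F z s = (\<Sum>y\<in>g ` T. \<Sum>x\<in>{x\<in>T. g x = y}. d x * mono (\<phi> x) z * s ^ (\<psi> x))"
      unfolding F by (rule sum.image_gen[OF fin])
    also have "\<dots> = (\<Sum>(\<alpha>,k)\<in>g ` T. c (\<alpha>,k) * mono \<alpha> z * s ^ k)"
    proof (rule sum.cong[OF refl])
      fix y assume "y \<in> g ` T"
      obtain \<alpha> k where y: "y = (\<alpha>, k)" by fastforce
      have "(\<Sum>x\<in>{x\<in>T. g x = y}. d x * mono (\<phi> x) z * s ^ (\<psi> x))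
          = (\<Sum>x\<in>{x\<in>T. g x = y}. d x * mono \<alpha> z * s ^ k)"
        by (rule sum.cong) (auto simp: g_def y)
      also have "\<dots> = c (\<alpha>,k) * mono \<alpha> z * s ^ k"
        unfolding c_def y by (simp add: sum_distrib_right)
      finally show "(\<Sum>x\<in>{x\<in>T. g x = y}. d x * mono (\<phi> x) z * s ^ (\<psi> x)) = (case y of (\<alpha>,k) \<Rightarrow> c (\<alpha>,k) * mono \<alpha> z * s ^ k)"
        by (simp add: y)
    qed
    finally show ?thesis .
  qed
  then show ?thesis unfolding poly_zs_def using fin by blast
qed

lemma poly_zs_rep:
  assumes "poly_zs F"
  obtains S c where "finite S" "\<And>z s. F z s = (\<Sum>x\<in>S. c x * mono (fst x) z * s ^ (snd x))"
proof -
  from assms obtain S c where "finite S" "\<And>z s. F z s = (\<Sum>(\<alpha>,k)\<in>S. c (\<alpha>,k) * mono \<alpha> z * s ^ k)"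
    unfolding poly_zs_def by blast
  then show ?thesis using that[of S c] by (simp add: case_prod_unfold)
qed

lemma pz_imp_poly_zs: "pz F \<Longrightarrow> poly_zs F"
proof (induction rule: pz.induct)
  case (pz_const c)
  show ?case by (rule poly_zs_gen[of "{0::nat}" _ "\<lambda>_. c" "\<lambda>_. \<lambda>_. 0" "\<lambda>_. 0"]) auto
next
  case (pz_z j)
  show ?case by (rule poly_zs_gen[of "{0::nat}" _ "\<lambda>_. 1" "\<lambda>_. \<lambda>k. if k = j then 1 else 0" "\<lambda>_. 0"])
     (auto simp: mono_delta)
next
  case pz_s
  show ?case by (rule poly_zs_gen[of "{0::nat}" _ "\<lambda>_. 1" "\<lambda>_. \<lambda>_. 0" "\<lambda>_. 1"]) auto
next
  case (pz_add F G)
  obtain S1 c1 where S1: "finite S1" "\<And>z s. F z s = (\<Sum>x\<in>S1. c1 x * mono (fst x) z * s ^ (snd x))"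
    using poly_zs_rep[OF pz_add.IH(1)] by blast
  obtain S2 c2 where S2: "finite S2" "\<And>z s. G z s = (\<Sum>x\<in>S2. c2 x * mono (fst x) z * s ^ (snd x))"
    using poly_zs_rep[OF pz_add.IH(2)] by blast
  show ?case
    by (rule poly_zs_gen[of "S1 <+> S2" _ "case_sum c1 c2" "case_sum fst fst" "case_sum snd snd"])
       (auto simp: S1 S2 sum.Plus o_def)
next
  case (pz_mult F G)
  obtain S1 c1 where S1: "finite S1" "\<And>z s. F z s = (\<Sum>x\<in>S1. c1 x * mono (fst x) z * s ^ (snd x))"
    using poly_zs_rep[OF pz_mult.IH(1)] by blast
  obtain S2 c2 where S2: "finite S2" "\<And>z s. G z s = (\<Sum>x\<in>S2. c2 x * mono (fst x) z * s ^ (snd x))"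
    using poly_zs_rep[OF pz_mult.IH(2)] by blast
  show ?case
  proof (rule poly_zs_gen[of "S1 \<times> S2" _ "\<lambda>(x,y). c1 x * c2 y" "\<lambda>(x,y). (\<lambda>k. fst x k + fst y k)"
       "\<lambda>(x,y). snd x + snd y"])
    show "finite (S1 \<times> S2)" using S1 S2 by simp
    fix z s
    have "F z s * G z s = (\<Sum>x\<in>S1. \<Sum>y\<in>S2. (c1 x * mono (fst x) z * s ^ (snd x)) * (c2 y * mono (fst y) z * s ^ (snd y)))"
      unfolding S1 S2 by (rule sum_product)
    also have "\<dots> = (\<Sum>(x,y)\<in>S1 \<times> S2. (c1 x * mono (fst x) z * s ^ (snd x)) * (c2 y * mono (fst y) z * s ^ (snd y)))"
      by (rule sum.cartesian_product)
    also have "\<dots> = (\<Sum>xy\<in>S1 \<times> S2. (case xy of (x,y) \<Rightarrow> c1 x * c2 y) * mono (case xy of (x,y) \<Rightarrow> (\<lambda>k. fst x k + fst y k)) z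
         * s ^ (case xy of (x,y) \<Rightarrow> snd x + snd y))"
      by (rule sum.cong) (auto simp: mono_add power_add)
    finally show "F z s * G z s = \<dots>" .
  qed
qed

lemma poly_zs_imp_pz: "poly_zs F \<Longrightarrow> pz F"
proof -
  assume "poly_zs F"
  then obtain S c where S: "finite S" "\<And>z s. F z s = (\<Sum>x\<in>S. c x * mono (fst x) z * s ^ (snd x))"
    using poly_zs_rep by blast
  show ?thesis
    by (rule pz_eq[OF pz_sum[OF S(1)]]) (auto simp: S(2) intro!: pz_mult pz_const pz_mono pz_power pz_s)
qed

lemma cvec_zero[simp]: "cvec t 0 = 0"
  by (simp add: vec_eq_iff)

lemma cvec_one[simp]: "cvec 1 w = w"
  by (simp add: vec_eq_iff)

lemma deriv_term:
  fixes a b :: complex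
  shows "((\<lambda>s. (a / of_nat (Suc k)) * b * s ^ Suc k) has_field_derivative a * b * s ^ k) (at s)"
proof -
  have nz: "(of_nat (Suc k) :: complex) \<noteq> 0" by (simp only: of_nat_eq_0_iff nat.simps(3) not_False_eq_True)
  have "((\<lambda>s. (a / of_nat (Suc k)) * b * s ^ Suc k) has_field_derivative
      (a / of_nat (Suc k)) * b * (of_nat (Suc k) * (1 * s ^ (Suc k - Suc 0)))) (at s)"
    by (rule DERIV_cmult[OF DERIV_power[OF DERIV_ident]])
  moreover have "(a / of_nat (Suc k)) * b * (of_nat (Suc k) * (1 * s ^ (Suc k - Suc 0))) = a * b * s ^ k"
    using nz by (simp del: of_nat_Suc)
  ultimately show ?thesis by simp
qed

lemma pz_antideriv:
  assumes "pz H"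
  shows "\<exists>G. pz G \<and> (\<forall>z s. (G z has_field_derivative H z s) (at s))"
proof -
  obtain S c where S: "finite S" "\<And>z s. H z s = (\<Sum>x\<in>S. c x * mono (fst x) z * s ^ (snd x))"
    using poly_zs_rep[OF pz_imp_poly_zs[OF assms]] by blast
  define G where "G z s = (\<Sum>x\<in>S. (c x / of_nat (Suc (snd x))) * mono (fst x) z * s ^ Suc (snd x))" for z s
  have "pz G" unfolding G_def
    by (rule pz_sum[OF S(1)]) (intro pz_mult pz_const pz_mono pz_power pz_s)
  moreover have "(G z has_field_derivative H z s) (at s)" for z s
  proof -
    have trm: "((\<lambda>s. (c x / of_nat (Suc (snd x))) * mono (fst x) z * s ^ Suc (snd x)) has_field_derivative
       c x * mono (fst x) z * s ^ snd x) (at s)" for x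
      by (rule deriv_term)
    have "((\<lambda>s. G z s) has_field_derivative (\<Sum>x\<in>S. c x * mono (fst x) z * s ^ snd x)) (at s)"
      unfolding G_def by (rule DERIV_sum) (rule trm)
    then show ?thesis unfolding S(2) by simp
  qed
  ultimately show ?thesis by blast
qed

lemma pp_dens':
  assumes "pp P d" "pp Q e" and Z: "\<And>t. t \<noteq> c \<Longrightarrow> P (z + cvec t u) (w + cvec t v) = Q (z + cvec t u) (w + cvec t v)"
  shows "P z w = Q z w"
proof -
  have "pp P (max d e)" "pp Q (max d e)" using assms(1,2) by (auto elim: pp_mono)
  then have "pp (\<lambda>z w. P z w - Q z w) (max d e)" by (rule pp_diff)
  from pp_dens[OF this, of c z u w v] Z show ?thesis by simp
qed

lemma main_pol:
  fixes Qt :: "complex^'n::finite \<Rightarrow> complex^'n \<Rightarrow> complex" and p1 p2 :: 'n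
    and L1 L2 :: "complex^'n \<Rightarrow> complex"
  assumes Qt: "pp Qt 2"
    and p12: "p1 \<noteq> p2"
    and g1: "\<And>z w. DD Qt z w 0 (axis p1 1) = z $ p1 - L1 w" and L1: "pp (\<lambda>z w. L1 w) 1"
    and g2: "\<And>z w. DD Qt z w 0 (axis p2 1) = z $ p2 - L2 w"
  shows "pp P d \<Longrightarrow> (\<forall>j k z w. DD P z w 0 (axis j 1) * DD Qt z w 0 (axis k 1) =
                                DD P z w 0 (axis k 1) * DD Qt z w 0 (axis j 1))
         \<Longrightarrow> \<exists>F. pz F \<and> (\<forall>z w. P z w = F z (Qt z w))"
proof (induction d arbitrary: P rule: less_induct)
  case (less d P)
  define g where "g j z w = DD Qt z w 0 (axis j 1)" for j z w
  define dP where "dP j z w = DD P z w 0 (axis j 1)" for j z w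
  have gpp: "pp (g j) 1" for j unfolding g_def using DD_pp[OF Qt, of 0 "axis j 1"] by simp
  have dPpp: "pp (dP j) (d - 1)" for j unfolding dP_def using DD_pp[OF less.prems(1)] by simp
  have cond: "dP j z w * g k z w = dP k z w * g j z w" for j k z w
    using less.prems(2) unfolding dP_def g_def by blast
  show ?case
  proof (cases "d = 0")
    case True
    then obtain c where "P = (\<lambda>z w. c)" using pp_0_const less.prems(1) by blast
    then show ?thesis using pz_const by blast
  next
    case False
    have shift2: "(z + cvec t (axis p2 1)) $ p1 = z $ p1" for z t
      using p12 by (simp add: axis_def)
    have A: "dP p1 z w = 0" if "z $ p1 = L1 w" for z w
    proof (rule pp_dens[OF dPpp, where c = "- (z $ p2 - L2 w)" and u = "axis p2 1" and v = 0])
      fix t assume t: "t \<noteq> - (z $ p2 - L2 w)"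
      let ?z = "z + cvec t (axis p2 1)"
      have "g p1 ?z w = 0" unfolding g_def g1 shift2 using that by simp
      moreover have "g p2 ?z w \<noteq> 0" unfolding g_def g2 using t by (simp add: algebra_simps)
      ultimately have "dP p1 ?z w = 0" using cond[of p1 ?z w p2] by simp
      then show "dP p1 (z + cvec t (axis p2 1)) (w + cvec t 0) = 0" by simp
    qed
    obtain h where hpp: "pp h (d - 1 - 1)"
      and hdiv: "\<And>z w. dP p1 z w - dP p1 (vupd z p1 (L1 w)) w = (z $ p1 - L1 w) * h z w"
      using pp_div[OF L1 dPpp, of p1] by blast
    have B: "dP p1 z w = g p1 z w * h z w" for z w
      using hdiv[of z w] A[of "vupd z p1 (L1 w)" w] unfolding g_def g1 by simp
    have shift1: "(z + cvec t (axis p1 1)) $ p1 = z $ p1 + t" for z t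
      by simp
    have C: "dP k z w = h z w * g k z w" for k z w
    proof (rule pp_dens'[OF dPpp pp_mult[OF hpp gpp], where c = "- (z $ p1 - L1 w)" and u = "axis p1 1" and v = 0])
      fix t assume t: "t \<noteq> - (z $ p1 - L1 w)"
      let ?z = "z + cvec t (axis p1 1)"
      have "g p1 ?z w \<noteq> 0" unfolding g_def g1 shift1 using t by (simp add: algebra_simps)
      moreover have "dP k ?z w * g p1 ?z w = h ?z w * g k ?z w * g p1 ?z w"
        using cond[of k ?z w p1] B[of ?z w] by (simp add: algebra_simps)
      ultimately show "dP k (z + cvec t (axis p1 1)) (w + cvec t 0) = h (z + cvec t (axis p1 1)) (w + cvec t 0) * g k (z + cvec t (axis p1 1)) (w + cvec t 0)"
        by simp
    qed
    have dPfun: "dP k = (\<lambda>z w. h z w * g k z w)" for k using C by (intro ext) auto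
    have D: "DD h z w 0 (axis j 1) * g k z w = DD h z w 0 (axis k 1) * g j z w" for j k z w
    proof -
      have s1: "DD (dP k) z w 0 (axis j 1) = DD (dP j) z w 0 (axis k 1)"
        unfolding dP_def by (rule DD_sym[OF less.prems(1)])
      have s2: "DD (g k) z w 0 (axis j 1) = DD (g j) z w 0 (axis k 1)"
        unfolding g_def by (rule DD_sym[OF Qt])
      have "DD (dP k) z w 0 (axis j 1) = DD h z w 0 (axis j 1) * g k z w + h z w * DD (g k) z w 0 (axis j 1)"
        unfolding dPfun by (rule DD_mult[OF hpp gpp])
      moreover have "DD (dP j) z w 0 (axis k 1) = DD h z w 0 (axis k 1) * g j z w + h z w * DD (g j) z w 0 (axis k 1)"
        unfolding dPfun by (rule DD_mult[OF hpp gpp])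
      ultimately show ?thesis using s1 s2 by simp
    qed
    have dlt: "d - 1 - 1 < d" using False by simp
    have Dall: "\<forall>j k z w. DD h z w 0 (axis j 1) * DD Qt z w 0 (axis k 1) =
                                DD h z w 0 (axis k 1) * DD Qt z w 0 (axis j 1)"
      using D unfolding g_def by blast
    from less.IH[OF dlt hpp Dall] obtain H where H: "pz H" "\<And>z w. h z w = H z (Qt z w)"
      by blast
    obtain G where G: "pz G" "\<And>z s. (G z has_field_derivative H z s) (at s)"
      using pz_antideriv[OF H(1)] by blast
    obtain dG where dG: "pp (\<lambda>z w. G z (Qt z w)) dG" using pz_pp[OF Qt G(1)] by blast
    define R where "R z w = P z w - G z (Qt z w)" for z w
    have Rconst: "R z w = R z 0" for z w
    proof -
      define \<phi> where "\<phi> t = R z (cvec t w)" for t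
      have "(\<phi> has_field_derivative 0) (at t0)" for t0
      proof -
        have P': "((\<lambda>t. P (z + cvec t 0) (0 + cvec t w)) has_field_derivative
            DD P (z + cvec t0 0) (0 + cvec t0 w) 0 w) (at t0)"
          by (rule pp_DD_has_at[OF less.prems(1)])
        have Q': "((\<lambda>t. Qt (z + cvec t 0) (0 + cvec t w)) has_field_derivative
            DD Qt (z + cvec t0 0) (0 + cvec t0 w) 0 w) (at t0)"
          by (rule pp_DD_has_at[OF Qt])
        have zc: "z + cvec t 0 = z" "0 + cvec t w = cvec t w" for t by (simp_all add: vec_eq_iff)
        have lin: "DD P z x 0 w = h z x * DD Qt z x 0 w" for x
        proof -
          have "DD P z x 0 w = (\<Sum>k\<in>UNIV. w $ k * dP k z x)"
            using DD_lin[OF less.prems(1), of z x 0 w] unfolding dP_def by simp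
          also have "\<dots> = (\<Sum>k\<in>UNIV. h z x * (w $ k * g k z x))"
            by (rule sum.cong) (simp_all add: C mult.left_commute)
          also have "\<dots> = h z x * DD Qt z x 0 w"
            using DD_lin[OF Qt, of z x 0 w] unfolding g_def by (simp add: sum_distrib_left)
          finally show ?thesis .
        qed
        have "((\<lambda>t. P z (cvec t w) - G z (Qt z (cvec t w))) has_field_derivative
            DD P z (cvec t0 w) 0 w - H z (Qt z (cvec t0 w)) * DD Qt z (cvec t0 w) 0 w) (at t0)"
          using P' Q' unfolding zc
          by (intro DERIV_diff DERIV_chain'[where g="G z"]) (auto intro: G(2))
        then show ?thesis unfolding \<phi>_def R_def lin H(2)[symmetric] by simp
      qed
      then obtain c where "\<forall>x\<in>UNIV. \<phi> x = c"
        using has_field_derivative_zero_constant[of UNIV \<phi>] by auto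
      then have "\<phi> 1 = \<phi> 0" by simp
      then show ?thesis unfolding \<phi>_def by (simp add: vec_eq_iff)
    qed
    define F where "F z s = G z s + (P z 0 - G z (Qt z 0))" for z s
    have "pz (\<lambda>z s. G z (Qt z 0))" by (rule pz_subst[OF G(1) pp_pz0[OF Qt]])
    then have "pz F" unfolding F_def
      by (intro pz_add[OF G(1)] pz_diff[OF pp_pz0[OF less.prems(1)]])
    moreover have "P z w = F z (Qt z w)" for z w
      using Rconst[of z w] unfolding R_def F_def by (simp add: algebra_simps)
    ultimately show ?thesis by blast
  qed
qed

definition ppx :: "(complex^'n::finite \<Rightarrow> complex^'n \<Rightarrow> complex) \<Rightarrow> bool" where
  "ppx P \<longleftrightarrow> (\<exists>d. pp P d)"

lemma ppx_const[simp]: "ppx (\<lambda>z w. c)"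
  unfolding ppx_def using pp_const by blast
lemma ppx_z[simp]: "ppx (\<lambda>z w. z $ j)"
  unfolding ppx_def using pp_z by blast
lemma ppx_w[simp]: "ppx (\<lambda>z w. w $ j)"
  unfolding ppx_def using pp_w by blast
lemma ppx_add[simp]: "ppx P \<Longrightarrow> ppx Q \<Longrightarrow> ppx (\<lambda>z w. P z w + Q z w)"
proof -
  assume "ppx P" "ppx Q"
  then obtain d e where "pp P d" "pp Q e" unfolding ppx_def by blast
  then have "pp P (max d e)" "pp Q (max d e)" by (auto elim: pp_mono)
  then show ?thesis unfolding ppx_def using pp_add by blast
qed
lemma ppx_mult[simp]: "ppx P \<Longrightarrow> ppx Q \<Longrightarrow> ppx (\<lambda>z w. P z w * Q z w)"
  unfolding ppx_def using pp_mult by blast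
lemma ppx_eq: "ppx P \<Longrightarrow> (\<And>z w. P z w = Q z w) \<Longrightarrow> ppx Q"
  unfolding ppx_def using pp_eq by blast
lemma ppx_diff[simp]: "ppx P \<Longrightarrow> ppx Q \<Longrightarrow> ppx (\<lambda>z w. P z w - Q z w)"
  by (rule ppx_eq[OF ppx_add[OF _ ppx_mult[OF ppx_const[of "-1"]]]]) auto
lemma ppx_sum[simp]: "finite S \<Longrightarrow> (\<And>x. x \<in> S \<Longrightarrow> ppx (P x)) \<Longrightarrow> ppx (\<lambda>z w. \<Sum>x\<in>S. P x z w)"
proof (induction S rule: finite_induct)
  case empty
  then show ?case by simp
next
  case (insert x S)
  then show ?case using ppx_add[of "P x" "\<lambda>z w. \<Sum>x\<in>S. P x z w"] by simp
qed
lemma ppx_prod: "finite S \<Longrightarrow> (\<And>x. x \<in> S \<Longrightarrow> ppx (P x)) \<Longrightarrow> ppx (\<lambda>z w. \<Prod>x\<in>S. P x z w)"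
proof (induction S rule: finite_induct)
  case empty
  then show ?case by simp
next
  case (insert x S)
  then show ?case using ppx_mult[of "P x" "\<lambda>z w. \<Prod>x\<in>S. P x z w"] by simp
qed
lemma ppx_power: "ppx P \<Longrightarrow> ppx (\<lambda>z w. P z w ^ n)"
  by (induction n) auto
lemma ppx_monoz: "ppx (\<lambda>z w. mono \<alpha> z)"
  unfolding mono_def by (rule ppx_prod) (auto intro: ppx_power)
lemma ppx_monow: "ppx (\<lambda>z w. mono \<alpha> w)"
  unfolding mono_def by (rule ppx_prod) (auto intro: ppx_power)

lemma DD_add': "ppx P \<Longrightarrow> ppx Q \<Longrightarrow> DD (\<lambda>z w. P z w + Q z w) z w u v = DD P z w u v + DD Q z w u v"
  unfolding ppx_def using DD_add by blast
lemma DD_mult': "ppx P \<Longrightarrow> ppx Q \<Longrightarrow> DD (\<lambda>z w. P z w * Q z w) z w u v = DD P z w u v * Q z w + P z w * DD Q z w u v"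
  unfolding ppx_def using DD_mult by blast
lemma DD_sum': "finite S \<Longrightarrow> (\<And>x. x \<in> S \<Longrightarrow> ppx (P x)) \<Longrightarrow>
   DD (\<lambda>z w. \<Sum>x\<in>S. P x z w) z w u v = (\<Sum>x\<in>S. DD (P x) z w u v)"
proof (induction S rule: finite_induct)
  case empty
  then show ?case by simp
next
  case (insert x S)
  have "DD (\<lambda>z w. \<Sum>x\<in>insert x S. P x z w) z w u v = DD (\<lambda>z w. P x z w + (\<Sum>x\<in>S. P x z w)) z w u v"
    using insert by simp
  also have "\<dots> = DD (P x) z w u v + DD (\<lambda>z w. \<Sum>x\<in>S. P x z w) z w u v"
    using insert by (intro DD_add') auto
  finally show ?case using insert by simp
qed

lemma pp_real_diff: "pp P d \<Longrightarrow> (\<lambda>z. P z (vconj z)) differentiable (at z)"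
proof (induction rule: pp.induct)
  case (pp_z j)
  show ?case by (rule bounded_linear_imp_differentiable) (rule bounded_linear_vec_nth)
next
  case (pp_w j)
  have "bounded_linear (\<lambda>z::complex^'a. cnj (z $ j))"
    using bounded_linear_compose[OF bounded_linear_cnj bounded_linear_vec_nth[of j]] by (simp add: o_def)
  then show ?case by (simp add: bounded_linear_imp_differentiable)
next
  case (pp_add P d Q)
  show ?case using differentiable_add[OF pp_add.IH] by simp
next
  case (pp_mult P d Q e)
  show ?case using differentiable_mult[OF pp_mult.IH] by simp
qed simp_all

lemma axis_sum: "(\<Sum>k\<in>UNIV. (axis j c) $ k * X k) = c * (X j :: complex)"
proof -
  have "(axis j c) $ k * X k = (if j = k then c * X j else 0)" for k by (simp add: axis_def)
  then show ?thesis by simp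
qed

lemma wirt_pp:
  assumes P: "pp P d"
  shows "wirt_dbar (\<lambda>z. P z (vconj z)) j z = DD P z (vconj z) 0 (axis j 1)"
proof -
  let ?f = "\<lambda>z. P z (vconj z)"
  define D where "D = frechet_derivative ?f (at z)"
  have fd: "(?f has_derivative D) (at z)"
    using frechet_derivative_works pp_real_diff[OF P] D_def by blast
  have lineD: "D v = DD P z (vconj z) v (vconj v)" for v
  proof -
    have l: "((\<lambda>t::real. z + t *\<^sub>R v) has_derivative (\<lambda>t. t *\<^sub>R v)) (at 0)"
      by (auto intro!: derivative_eq_intros)
    have "((?f \<circ> (\<lambda>t::real. z + t *\<^sub>R v)) has_derivative (D \<circ> (\<lambda>t. t *\<^sub>R v))) (at 0)"
      by (rule diff_chain_at[OF l]) (simp add: fd)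
    moreover have "(D \<circ> (\<lambda>t. t *\<^sub>R v)) = (\<lambda>t. t *\<^sub>R D v)"
      using linear_cmul[OF has_derivative_linear[OF fd]] by (auto simp: o_def)
    ultimately have A: "((\<lambda>t::real. ?f (z + t *\<^sub>R v)) has_vector_derivative D v) (at 0)"
      unfolding has_vector_derivative_def by (simp add: o_def)
    have eq: "?f (z + t *\<^sub>R v) = P (z + cvec (of_real t) v) (vconj z + cvec (of_real t) (vconj v))" for t
      by (rule arg_cong2[where f=P]) (simp_all add: vec_eq_iff scaleR_conv_of_real[where 'a=complex])
    have "((\<lambda>s. P (z + cvec s v) (vconj z + cvec s (vconj v))) has_field_derivative
        DD P z (vconj z) v (vconj v)) (at (of_real 0))"
      using pp_DD_has[OF P] by simp
    from has_vector_derivative_real_field[OF this]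
    have B: "((\<lambda>t::real. ?f (z + t *\<^sub>R v)) has_vector_derivative DD P z (vconj z) v (vconj v)) (at 0)"
      unfolding eq .
    show ?thesis using vector_derivative_unique_at[OF A B] .
  qed
  have ax: "vconj (axis j 1) = axis j 1" "vconj (axis j \<i>) = axis j (- \<i>)"
    by (simp_all add: vec_eq_iff axis_def)
  have L: "DD P z (vconj z) (axis j a) (axis j b) = a * DD P z (vconj z) (axis j 1) 0 + b * DD P z (vconj z) 0 (axis j 1)" for a b
    using DD_lin[OF P, of z "vconj z" "axis j a" "axis j b"] by (simp add: sum.distrib axis_sum)
  show ?thesis
    unfolding wirt_dbar_def Let_def D_def[symmetric] lineD ax L
    by (simp add: field_simps)
qed

definition eps :: "'n set \<Rightarrow> 'n set \<Rightarrow> 'n \<Rightarrow> complex" where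
  "eps Pos Neg j = (if j \<in> Pos then 1 else if j \<in> Neg then -1 else 0)"

definition Qt :: "'n set \<Rightarrow> 'n set \<Rightarrow> complex^'n^'n \<Rightarrow> complex^'n::finite \<Rightarrow> complex^'n \<Rightarrow> complex" where
  "Qt Pos Neg b = (\<lambda>z w. (\<Sum>j\<in>UNIV. eps Pos Neg j * z $ j * w $ j)
     + (\<Sum>j\<in>UNIV. \<Sum>k\<in>UNIV. b $ j $ k * z $ j * z $ k)
     + (\<Sum>j\<in>UNIV. \<Sum>k\<in>UNIV. cnj (b $ j $ k) * w $ j * w $ k))"

lemma Qt_pp: "pp (Qt Pos Neg b) 2"
proof -
  have a: "pp (\<lambda>z w. \<Sum>j\<in>UNIV. eps Pos Neg j * z $ j * w $ j) 2"
  proof (rule pp_sum)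
    fix j
    show "pp (\<lambda>z w. eps Pos Neg j * z $ j * w $ j) 2"
      using pp_mult[OF pp_mult[OF pp_const pp_z] pp_w] by (simp add: numeral_2_eq_2)
  qed simp
  have b: "pp (\<lambda>z w. \<Sum>j\<in>UNIV. \<Sum>k\<in>UNIV. b $ j $ k * z $ j * z $ k) 2"
  proof (rule pp_sum, simp, rule pp_sum)
    fix j k
    show "pp (\<lambda>z w. b $ j $ k * z $ j * z $ k) 2"
      using pp_mult[OF pp_mult[OF pp_const pp_z] pp_z] by (simp add: numeral_2_eq_2)
  qed simp
  have c: "pp (\<lambda>z w. \<Sum>j\<in>UNIV. \<Sum>k\<in>UNIV. cnj (b $ j $ k) * w $ j * w $ k) 2"
  proof (rule pp_sum, simp, rule pp_sum)
    fix j k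
    show "pp (\<lambda>z w. cnj (b $ j $ k) * w $ j * w $ k) 2"
      using pp_mult[OF pp_mult[OF pp_const pp_w] pp_w] by (simp add: numeral_2_eq_2)
  qed simp
  show ?thesis unfolding Qt_def by (rule pp_add[OF pp_add[OF a b] c])
qed

lemma Qt_real:
  assumes "Pos \<inter> Neg = {}"
  shows "Qt Pos Neg b z (vconj z) = complex_of_real (Qform Pos Neg b z)"
proof -
  have e: "eps Pos Neg j * x = (if j \<in> Pos then x else 0) - (if j \<in> Neg then x else 0)" for j x
    using assms by (auto simp: eps_def)
  have h: "(\<Sum>j\<in>UNIV. eps Pos Neg j * z $ j * cnj (z $ j)) = complex_of_real (herm_form Pos Neg z)"
  proof -
    have "(\<Sum>j\<in>UNIV. eps Pos Neg j * z $ j * cnj (z $ j)) =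
        (\<Sum>j\<in>UNIV. eps Pos Neg j * complex_of_real ((cmod (z $ j))^2))"
      by (rule sum.cong[OF refl]) (simp add: complex_norm_square[symmetric] mult.assoc)
    also have "\<dots> = (\<Sum>j\<in>UNIV. (if j \<in> Pos then complex_of_real ((cmod (z $ j))^2) else 0))
        - (\<Sum>j\<in>UNIV. (if j \<in> Neg then complex_of_real ((cmod (z $ j))^2) else 0))"
      unfolding e by (simp add: sum_subtractf)
    also have "\<dots> = complex_of_real (herm_form Pos Neg z)"
      unfolding herm_form_def by (simp add: sum.If_cases)
    finally show ?thesis .
  qed
  have c: "(\<Sum>j\<in>UNIV. \<Sum>k\<in>UNIV. cnj (b $ j $ k) * cnj (z $ j) * cnj (z $ k)) = cnj (bilin b z)"
    unfolding bilin_def by simp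
  have q: "Qt Pos Neg b z (vconj z) = complex_of_real (herm_form Pos Neg z) + bilin b z + cnj (bilin b z)"
    unfolding Qt_def using h c by (simp add: bilin_def)
  show ?thesis unfolding q Qform_def by (simp add: complex_eq_iff)
qed

lemma axis1_nth: "axis m (1::complex) $ j = (if j = m then 1 else 0)"
  by (simp add: axis_def)

lemma Qt_DD: "DD (Qt Pos Neg b) z w 0 (axis m 1) =
   eps Pos Neg m * z $ m + (\<Sum>k\<in>UNIV. (cnj (b $ m $ k) + cnj (b $ k $ m)) * w $ k)"
proof -
  have pa: "ppx (\<lambda>z w. \<Sum>j\<in>UNIV. eps Pos Neg j * z $ j * w $ j)" by simp
  have pb: "ppx (\<lambda>z w. \<Sum>j\<in>UNIV. \<Sum>k\<in>UNIV. b $ j $ k * z $ j * z $ k)" by simp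
  have pc: "ppx (\<lambda>z w. \<Sum>j\<in>UNIV. \<Sum>k\<in>UNIV. cnj (b $ j $ k) * w $ j * w $ k)" by simp
  have A: "DD (\<lambda>z w. \<Sum>j\<in>UNIV. eps Pos Neg j * z $ j * w $ j) z w 0 (axis m 1) = eps Pos Neg m * z $ m"
  proof -
    have "DD (\<lambda>z w. \<Sum>j\<in>UNIV. eps Pos Neg j * z $ j * w $ j) z w 0 (axis m 1) =
        (\<Sum>j\<in>UNIV. eps Pos Neg j * z $ j * (axis m 1 $ j))"
      by (simp add: DD_sum' DD_mult')
    also have "\<dots> = (\<Sum>j\<in>UNIV. if m = j then eps Pos Neg m * z $ m else 0)"
      by (rule sum.cong) (auto simp: axis1_nth)
    finally show ?thesis by simp
  qed
  have B: "DD (\<lambda>z w. \<Sum>j\<in>UNIV. \<Sum>k\<in>UNIV. b $ j $ k * z $ j * z $ k) z w 0 (axis m 1) = 0"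
    by (simp add: DD_sum' DD_mult')
  have C: "DD (\<lambda>z w. \<Sum>j\<in>UNIV. \<Sum>k\<in>UNIV. cnj (b $ j $ k) * w $ j * w $ k) z w 0 (axis m 1) =
     (\<Sum>k\<in>UNIV. (cnj (b $ m $ k) + cnj (b $ k $ m)) * w $ k)"
  proof -
    have "DD (\<lambda>z w. \<Sum>j\<in>UNIV. \<Sum>k\<in>UNIV. cnj (b $ j $ k) * w $ j * w $ k) z w 0 (axis m 1) =
      (\<Sum>j\<in>UNIV. \<Sum>k\<in>UNIV. cnj (b $ j $ k) * (axis m 1 $ j) * w $ k + cnj (b $ j $ k) * w $ j * (axis m 1 $ k))"
      by (simp add: DD_sum' DD_mult')
    also have "\<dots> = (\<Sum>j\<in>UNIV. \<Sum>k\<in>UNIV. cnj (b $ j $ k) * (axis m 1 $ j) * w $ k) +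
        (\<Sum>j\<in>UNIV. \<Sum>k\<in>UNIV. cnj (b $ j $ k) * w $ j * (axis m 1 $ k))"
      by (simp add: sum.distrib)
    also have "(\<Sum>j\<in>UNIV. \<Sum>k\<in>UNIV. cnj (b $ j $ k) * (axis m 1 $ j) * w $ k) = (\<Sum>k\<in>UNIV. cnj (b $ m $ k) * w $ k)"
    proof -
      have "(\<Sum>j\<in>UNIV. \<Sum>k\<in>UNIV. cnj (b $ j $ k) * (axis m 1 $ j) * w $ k) =
         (\<Sum>j\<in>UNIV. if j = m then (\<Sum>k\<in>UNIV. cnj (b $ m $ k) * w $ k) else 0)"
        by (rule sum.cong) (auto simp: axis1_nth)
      then show ?thesis by simp
    qed
    also have "(\<Sum>j\<in>UNIV. \<Sum>k\<in>UNIV. cnj (b $ j $ k) * w $ j * (axis m 1 $ k)) = (\<Sum>j\<in>UNIV. cnj (b $ j $ m) * w $ j)"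
    proof (rule sum.cong[OF refl])
      fix j
      have "(\<Sum>k\<in>UNIV. cnj (b $ j $ k) * w $ j * (axis m 1 $ k)) = (\<Sum>k\<in>UNIV. if m = k then cnj (b $ j $ m) * w $ j else 0)"
        by (rule sum.cong) (auto simp: axis1_nth)
      then show "(\<Sum>k\<in>UNIV. cnj (b $ j $ k) * w $ j * (axis m 1 $ k)) = cnj (b $ j $ m) * w $ j" by simp
    qed
    finally show ?thesis by (simp add: sum.distrib distrib_right)
  qed
  have "DD (Qt Pos Neg b) z w 0 (axis m 1) =
     DD (\<lambda>z w. \<Sum>j\<in>UNIV. eps Pos Neg j * z $ j * w $ j) z w 0 (axis m 1) +
     DD (\<lambda>z w. \<Sum>j\<in>UNIV. \<Sum>k\<in>UNIV. b $ j $ k * z $ j * z $ k) z w 0 (axis m 1) +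
     DD (\<lambda>z w. \<Sum>j\<in>UNIV. \<Sum>k\<in>UNIV. cnj (b $ j $ k) * w $ j * w $ k) z w 0 (axis m 1)"
    unfolding Qt_def by (simp add: DD_add'[OF ppx_add[OF pa pb] pc] DD_add'[OF pa pb])
  then show ?thesis using A B C by simp
qed

lemma in_MCR:
  fixes Q :: "complex^'n::finite \<Rightarrow> real"
  assumes nz: "G j0 \<noteq> 0"
    and G: "\<And>j. G j = wirt_dbar (\<lambda>u. complex_of_real (Q u)) j z"
  shows "z \<in> M_CR Q"
proof -
  define p :: "complex^'n" where "p = (\<chi> j. cnj (G j))"
  define q :: "complex^'n" where "q = (\<chi> j. \<i> * cnj (G j))"
  have ip: "p \<bullet> a = Re (\<Sum>j\<in>UNIV. a $ j * G j)" for a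
    unfolding p_def inner_vec_def by (simp add: inner_complex_def Re_sum mult.commute)
  have iq: "q \<bullet> a = Im (\<Sum>j\<in>UNIV. a $ j * G j)" for a
    unfolding q_def inner_vec_def by (simp add: inner_complex_def Im_sum algebra_simps)
  have CR: "CR_space Q z = {y. \<forall>x\<in>span {p, q}. orthogonal x y}"
  proof (intro set_eqI iffI)
    fix a assume "a \<in> CR_space Q z"
    then have S: "(\<Sum>j\<in>UNIV. a $ j * G j) = 0" unfolding CR_space_def G by simp
    show "a \<in> {y. \<forall>x\<in>span {p, q}. orthogonal x y}"
    proof (clarify)
      fix x assume "x \<in> span {p, q}"
      have "orthogonal a x"
        by (rule orthogonal_to_span[OF \<open>x \<in> span {p, q}\<close>])
           (auto simp: orthogonal_def inner_commute[of a p] inner_commute[of a q] ip iq S)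
      then show "orthogonal x a" by (simp add: orthogonal_commute)
    qed
  next
    fix a assume "a \<in> {y. \<forall>x\<in>span {p, q}. orthogonal x y}"
    then have "orthogonal p a" "orthogonal q a" by (auto intro: span_base)
    then have "Re (\<Sum>j\<in>UNIV. a $ j * G j) = 0" "Im (\<Sum>j\<in>UNIV. a $ j * G j) = 0"
      unfolding orthogonal_def ip iq by auto
    then have "(\<Sum>j\<in>UNIV. a $ j * G j) = 0" by (simp add: complex_eq_iff)
    then show "a \<in> CR_space Q z" unfolding CR_space_def G by simp
  qed
  have pq: "p \<bullet> q = 0"
  proof -
    have "p \<bullet> q = Re (\<Sum>j\<in>UNIV. (\<i> * cnj (G j)) * G j)" unfolding ip q_def by simp
    also have "\<dots> = 0"
      by (simp add: Re_sum complex_norm_square[symmetric] mult.assoc)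
    finally show ?thesis .
  qed
  have p0: "p \<noteq> 0" using nz unfolding p_def by (auto simp: vec_eq_iff)
  have q0: "q \<noteq> 0" using nz unfolding q_def by (auto simp: vec_eq_iff)
  have pneq: "p \<noteq> q"
  proof
    assume "p = q"
    then have "cnj (G j0) = \<i> * cnj (G j0)" unfolding p_def q_def by (metis vec_lambda_beta)
    then have "(1 - \<i>) * cnj (G j0) = 0" by (simp add: algebra_simps)
    then show False using nz by simp
  qed
  have ind: "independent {p, q}"
    by (rule pairwise_orthogonal_independent)
       (auto simp: pairwise_def orthogonal_def pq inner_commute p0[symmetric] q0[symmetric])
  have d2: "dim (span {p, q}) = 2"
    using dim_eq_card_independent[OF ind] pneq by simp
  have "dim {y \<in> UNIV. \<forall>x \<in> span {p, q}. orthogonal x y} + dim (span {p, q}) = dim (UNIV :: (complex^'n) set)"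
    by (rule dim_subspace_orthogonal_to_vectors) auto
  then have "dim (CR_space Q z) + 2 = CARD('n) * 2" unfolding CR d2 by simp
  then have "dim (CR_space Q z) = 2 * (CARD('n) - 1)" by simp
  then show ?thesis unfolding M_CR_def by simp
qed

lemma Qc_eq: "complex_of_real (Qform Pos Neg b z) = complex_of_real (herm_form Pos Neg z) + bilin b z + cnj (bilin b z)"
  by (simp add: Qform_def complex_eq_iff)

lemma axis_diff_sum: "(\<Sum>m\<in>UNIV. (axis j c - axis k d) $ m * X m) = c * X j - d * (X k :: complex)"
  by (simp add: left_diff_distrib sum_subtractf axis_sum)

lemma two_elems:
  assumes "card A \<ge> 2"
  obtains p1 p2 where "p1 \<in> A" "p2 \<in> A" "p1 \<noteq> p2"
proof -
  have "finite A" using assms card.infinite by force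
  have "A \<noteq> {}" using assms by auto
  then obtain p1 where p1: "p1 \<in> A" by blast
  have "card (A - {p1}) \<ge> 1" using assms p1 \<open>finite A\<close> by (simp add: card_Diff_singleton)
  then have "A - {p1} \<noteq> {}" by (metis card.empty not_one_le_zero)
  then obtain p2 where "p2 \<in> A - {p1}" by blast
  then show ?thesis using that p1 by blast
qed

lemma part1:
  fixes Pos Neg :: "'n::finite set"
    and b :: "complex^'n^'n"
    and f :: "complex^'n \<Rightarrow> complex"
  assumes card: "card Pos \<ge> 2"
    and disj: "Pos \<inter> Neg = {}"
    and pf: "poly_zzbar f"
    and CR: "is_CR_on_MCR (Qform Pos Neg b) f"
  shows "\<exists>F. poly_zs F
           \<and> (\<forall>z. f z = F z (complex_of_real (herm_form Pos Neg z) + bilin b z + cnj (bilin b z)))"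
proof -
  obtain S c where S: "finite S" "\<And>z. f z = (\<Sum>(\<alpha>,\<beta>)\<in>S. c (\<alpha>,\<beta>) * mono \<alpha> z * mono \<beta> (vconj z))"
    using pf unfolding poly_zzbar_def by blast
  define Pf where "Pf z w = (\<Sum>x\<in>S. c x * mono (fst x) z * mono (snd x) w)" for z w :: "complex^'n"
  have fP: "f z = Pf z (vconj z)" for z unfolding S(2) Pf_def by (simp add: case_prod_unfold)
  have "ppx Pf" unfolding Pf_def[abs_def]
    by (rule ppx_sum[OF S(1)]) (intro ppx_mult ppx_const ppx_monoz ppx_monow)
  then obtain dP where Ppp: "pp Pf dP" unfolding ppx_def by blast
  let ?Qt = "Qt Pos Neg b"
  have Qf: "(\<lambda>u. complex_of_real (Qform Pos Neg b u)) = (\<lambda>u. ?Qt u (vconj u))"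
    using Qt_real[OF disj] by auto
  have fF: "f = (\<lambda>u. Pf u (vconj u))" using fP by auto
  have wQ: "wirt_dbar (\<lambda>u. complex_of_real (Qform Pos Neg b u)) j z = DD ?Qt z (vconj z) 0 (axis j 1)" for j z
    unfolding Qf by (rule wirt_pp[OF Qt_pp])
  have wf: "wirt_dbar f j z = DD Pf z (vconj z) 0 (axis j 1)" for j z
    unfolding fF by (rule wirt_pp[OF Ppp])
  have realcond: "DD Pf z (vconj z) 0 (axis j 1) * DD ?Qt z (vconj z) 0 (axis k 1) =
       DD Pf z (vconj z) 0 (axis k 1) * DD ?Qt z (vconj z) 0 (axis j 1)" for z j k
  proof (cases "\<exists>j0. DD ?Qt z (vconj z) 0 (axis j0 1) \<noteq> 0")
    case False
    then show ?thesis by simp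
  next
    case True
    then obtain j0 where j0: "DD ?Qt z (vconj z) 0 (axis j0 1) \<noteq> 0" by blast
    have zM: "z \<in> M_CR (Qform Pos Neg b)"
      by (rule in_MCR[where G="\<lambda>j. DD ?Qt z (vconj z) 0 (axis j 1)", OF j0]) (simp add: wQ)
    define a :: "complex^'n" where "a = axis j (DD ?Qt z (vconj z) 0 (axis k 1)) - axis k (DD ?Qt z (vconj z) 0 (axis j 1))"
    have "a \<in> CR_space (Qform Pos Neg b) z"
      unfolding CR_space_def mem_Collect_eq a_def wQ axis_diff_sum by (simp add: mult.commute)
    then have "(\<Sum>m\<in>UNIV. a $ m * wirt_dbar f m z) = 0"
      using CR zM unfolding is_CR_on_MCR_def by blast
    then show ?thesis unfolding a_def axis_diff_sum wf by (simp add: mult.commute)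
  qed
  have Dpp: "ppx (\<lambda>z w. DD Pf z w 0 (axis j 1) * DD ?Qt z w 0 (axis k 1) -
       DD Pf z w 0 (axis k 1) * DD ?Qt z w 0 (axis j 1))" for j k
  proof -
    have "ppx (\<lambda>z w. DD Pf z w 0 (axis m 1))" for m using DD_pp[OF Ppp] unfolding ppx_def by blast
    moreover have "ppx (\<lambda>z w. DD ?Qt z w 0 (axis m 1))" for m using DD_pp[OF Qt_pp] unfolding ppx_def by blast
    ultimately show ?thesis by simp
  qed
  have polcond: "\<forall>j k z w. DD Pf z w 0 (axis j 1) * DD ?Qt z w 0 (axis k 1) =
       DD Pf z w 0 (axis k 1) * DD ?Qt z w 0 (axis j 1)"
  proof (intro allI)
    fix j k z w
    obtain dd where "pp (\<lambda>z w. DD Pf z w 0 (axis j 1) * DD ?Qt z w 0 (axis k 1) -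
       DD Pf z w 0 (axis k 1) * DD ?Qt z w 0 (axis j 1)) dd" using Dpp[of j k] unfolding ppx_def by blast
    from polar[OF this] realcond show "DD Pf z w 0 (axis j 1) * DD ?Qt z w 0 (axis k 1) =
       DD Pf z w 0 (axis k 1) * DD ?Qt z w 0 (axis j 1)" by simp
  qed
  obtain p1 p2 where p: "p1 \<in> Pos" "p2 \<in> Pos" "p1 \<noteq> p2" using two_elems[OF card] by blast
  define Lf where "Lf p w = - (\<Sum>k\<in>UNIV. (cnj (b $ p $ k) + cnj (b $ k $ p)) * w $ k)" for p and w :: "complex^'n"
  have gp: "DD ?Qt z w 0 (axis p 1) = z $ p - Lf p w" if "p \<in> Pos" for p z w
    using that unfolding Qt_DD Lf_def by (simp add: eps_def)
  have Lpp: "pp (\<lambda>z w. Lf p w) 1" for p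
    unfolding Lf_def by (intro pp_neg pp_sum pp_cmult pp_w) simp
  obtain F where F: "pz F" "\<And>z w. Pf z w = F z (?Qt z w)"
    using main_pol[OF Qt_pp p(3) gp[OF p(1)] Lpp gp[OF p(2)] Ppp polcond] by blast
  show ?thesis
  proof (intro exI conjI allI)
    show "poly_zs F" by (rule pz_imp_poly_zs[OF F(1)])
    fix z
    show "f z = F z (complex_of_real (herm_form Pos Neg z) + bilin b z + cnj (bilin b z))"
      unfolding fP F(2) Qt_real[OF disj] Qc_eq ..
  qed
qed

lemma scaleR_cvec: "t *\<^sub>R (z::complex^'n) = cvec (of_real t) z"
  by (simp add: vec_eq_iff scaleR_conv_of_real[where 'a=complex])

lemma vconj_cvec_real: "vconj (cvec (of_real t) z) = cvec (of_real t) (vconj z)"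
  by (simp add: vec_eq_iff)

lemma mono_cvec: "mono \<alpha> (cvec \<tau> z) = \<tau> ^ mdeg \<alpha> * mono \<alpha> z"
  unfolding mono_def mdeg_def by (simp add: power_mult_distrib prod.distrib power_sum)

lemma Qt_cvec: "Qt Pos Neg b (cvec \<tau> z) (cvec \<tau> w) = \<tau>^2 * Qt Pos Neg b z w"
  unfolding Qt_def by (simp add: sum_distrib_left distrib_left power2_eq_square mult_ac)

lemma homog_scale:
  assumes "homog_poly_zzbar f d"
  shows "f (cvec (of_real t) z) = of_real t ^ d * f z"
proof -
  obtain S c where S: "finite S" "\<forall>(\<alpha>,\<beta>)\<in>S. mdeg \<alpha> + mdeg \<beta> = d"
    "\<And>z. f z = (\<Sum>(\<alpha>,\<beta>)\<in>S. c (\<alpha>,\<beta>) * mono \<alpha> z * mono \<beta> (vconj z))"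
    using assms unfolding homog_poly_zzbar_def by blast
  have "f (cvec (of_real t) z) = (\<Sum>(\<alpha>,\<beta>)\<in>S. of_real t ^ d * (c (\<alpha>,\<beta>) * mono \<alpha> z * mono \<beta> (vconj z)))"
    unfolding S(3) vconj_cvec_real mono_cvec
  proof (rule sum.cong[OF refl], clarify)
    fix \<alpha> \<beta> assume "(\<alpha>, \<beta>) \<in> S"
    then have "mdeg \<alpha> + mdeg \<beta> = d" using S(2) by blast
    then show "c (\<alpha>, \<beta>) * (complex_of_real t ^ mdeg \<alpha> * mono \<alpha> z) * (complex_of_real t ^ mdeg \<beta> * mono \<beta> (vconj z)) =
         complex_of_real t ^ d * (c (\<alpha>, \<beta>) * mono \<alpha> z * mono \<beta> (vconj z))"
      by (auto simp: power_add mult_ac)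
  qed
  also have "\<dots> = of_real t ^ d * f z"
    unfolding S(3) by (simp add: sum_distrib_left case_prod_unfold)
  finally show ?thesis .
qed

lemma real_polyfun_0:
  fixes a :: "nat \<Rightarrow> complex"
  assumes "\<And>t::real. (\<Sum>i\<le>n. a i * complex_of_real t ^ i) = 0" and "i \<le> n"
  shows "a i = 0"
proof -
  have "(\<Sum>i\<le>n. Re (a i) * t ^ i) = 0" for t
  proof -
    have "(\<Sum>i\<le>n. Re (a i) * t ^ i) = Re (\<Sum>i\<le>n. a i * complex_of_real t ^ i)"
      by (simp add: Re_sum flip: of_real_power)
    then show ?thesis using assms(1) by simp
  qed
  then have r: "Re (a i) = 0" using polyfun_eq_0[of "\<lambda>i. Re (a i)" n] assms(2) by blast
  have "(\<Sum>i\<le>n. Im (a i) * t ^ i) = 0" for t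
  proof -
    have "(\<Sum>i\<le>n. Im (a i) * t ^ i) = Im (\<Sum>i\<le>n. a i * complex_of_real t ^ i)"
      by (simp add: Im_sum flip: of_real_power)
    then show ?thesis using assms(1) by simp
  qed
  then have "Im (a i) = 0" using polyfun_eq_0[of "\<lambda>i. Im (a i)" n] assms(2) by blast
  with r show ?thesis by (simp add: complex_eq_iff)
qed

definition Fw :: "((('n::finite \<Rightarrow> nat) \<times> nat) set) \<Rightarrow> (('n \<Rightarrow> nat) \<times> nat \<Rightarrow> complex) \<Rightarrow> nat \<Rightarrow> complex^'n \<Rightarrow> complex \<Rightarrow> complex" where
  "Fw S c e z s = (\<Sum>x\<in>{x\<in>S. mdeg (fst x) + 2 * snd x = e}. c x * mono (fst x) z * s ^ (snd x))"

lemma Fw_scale: "Fw S c e (cvec \<tau> z) (\<tau>^2 * s) = \<tau> ^ e * Fw S c e z s"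
  unfolding Fw_def sum_distrib_left
proof (rule sum.cong[OF refl])
  fix x assume "x \<in> {x\<in>S. mdeg (fst x) + 2 * snd x = e}"
  then have e: "e = mdeg (fst x) + 2 * snd x" by simp
  show "c x * mono (fst x) (cvec \<tau> z) * (\<tau>^2 * s) ^ snd x = \<tau> ^ e * (c x * mono (fst x) z * s ^ snd x)"
  proof -
    have pw: "(\<tau>^2) ^ k = \<tau>^(2*k)" for k by (simp add: power_mult)
    show ?thesis unfolding mono_cvec e by (simp add: pw power_add power_mult_distrib mult_ac)
  qed
qed

lemma Fw_poly: "finite S \<Longrightarrow> poly_zs (Fw S c e)"
  unfolding poly_zs_def Fw_def
  by (rule exI[of _ "{x\<in>S. mdeg (fst x) + 2 * snd x = e}"], rule exI[of _ c]) (simp add: case_prod_unfold)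

lemma Fw_whomog: "finite S \<Longrightarrow> whomog_poly_zs (Fw S c e) e"
  unfolding whomog_poly_zs_def Fw_def
  by (rule exI[of _ "{x\<in>S. mdeg (fst x) + 2 * snd x = e}"], rule exI[of _ c]) (auto simp: case_prod_unfold)

lemma F_split:
  assumes "finite S"
  shows "(\<Sum>x\<in>S. c x * mono (fst x) z * s ^ (snd x)) = (\<Sum>e\<in>(\<lambda>x. mdeg (fst x) + 2 * snd x) ` S. Fw S c e z s)"
  unfolding Fw_def by (rule sum.image_gen[OF assms])

lemma homog_part:
  fixes Qc :: "complex^'n::finite \<Rightarrow> complex"
  assumes S: "finite S"
    and F: "\<And>z. f z = (\<Sum>x\<in>S. c x * mono (fst x) z * (Qc z) ^ (snd x))"
    and Qsc: "\<And>t z. Qc (cvec (of_real t) z) = (of_real t)^2 * Qc z"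
    and h: "homog_poly_zzbar f d"
  shows "f z = Fw S c d z (Qc z)"
proof -
  define wt where "wt x = mdeg (fst x) + 2 * snd x" for x :: "('n \<Rightarrow> nat) \<times> nat"
  define W where "W = wt ` S"
  have fW: "finite W" unfolding W_def using S by simp
  define N where "N = Max (insert d W)"
  have dN: "d \<le> N" unfolding N_def using fW by simp
  have WN: "W \<subseteq> {..N}" unfolding N_def using fW by auto
  define a where "a e = Fw S c e z (Qc z) - (if e = d then f z else 0)" for e
  have "(\<Sum>i\<le>N. a i * complex_of_real t ^ i) = 0" for t
  proof -
    have z0: "Fw S c e z s = 0" if "e \<notin> W" for e s
      unfolding Fw_def using that unfolding W_def wt_def by (auto intro!: sum.neutral)
    have "(\<Sum>i\<le>N. Fw S c i z (Qc z) * complex_of_real t ^ i) = (\<Sum>i\<in>W. Fw S c i z (Qc z) * complex_of_real t ^ i)"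
      by (rule sum.mono_neutral_right) (use WN z0 in auto)
    also have "\<dots> = (\<Sum>i\<in>W. Fw S c i (cvec (of_real t) z) (Qc (cvec (of_real t) z)))"
      unfolding Qsc Fw_scale by (simp add: mult.commute)
    also have "\<dots> = f (cvec (of_real t) z)"
      unfolding F F_split[OF S] W_def wt_def ..
    also have "\<dots> = complex_of_real t ^ d * f z" by (rule homog_scale[OF h])
    finally have A: "(\<Sum>i\<le>N. Fw S c i z (Qc z) * complex_of_real t ^ i) = complex_of_real t ^ d * f z" .
    have B: "(\<Sum>i\<le>N. (if i = d then f z else 0) * complex_of_real t ^ i) = complex_of_real t ^ d * f z"
    proof -
      have "(\<Sum>i\<le>N. (if i = d then f z else 0) * complex_of_real t ^ i) =
          (\<Sum>i\<le>N. if i = d then complex_of_real t ^ d * f z else 0)"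
        by (rule sum.cong) auto
      then show ?thesis using dN by simp
    qed
    show ?thesis unfolding a_def using A B by (simp add: left_diff_distrib sum_subtractf)
  qed
  from real_polyfun_0[OF this dN] show ?thesis unfolding a_def by simp
qed

lemma homog_unique:
  assumes "homog_poly_zzbar f d" "homog_poly_zzbar f e" "f z1 \<noteq> 0"
  shows "d = e"
proof -
  have "complex_of_real 2 ^ d * f z1 = complex_of_real 2 ^ e * f z1"
    using homog_scale[OF assms(1), of 2 z1] homog_scale[OF assms(2), of 2 z1] by simp
  then have "complex_of_real (2 ^ d) = complex_of_real (2 ^ e)" using assms(3) by simp
  then have "(2::real) ^ d = 2 ^ e" by (simp only: of_real_eq_iff)
  then show ?thesis by simp
qed

theorem lemma6p1:
  fixes Pos Neg :: "'n::finite set"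
    and b :: "complex^'n^'n"
    and f :: "complex^'n \<Rightarrow> complex"
  assumes "CARD('n) \<ge> 2"
    and "card Pos \<ge> 2"
    and "Pos \<inter> Neg = {}"
    and "nondegenerate_qf (Qform Pos Neg b)"
    and "poly_zzbar f"
    and "is_CR_on_MCR (Qform Pos Neg b) f"
  shows "\<exists>F. poly_zs F
           \<and> (\<forall>z. f z = F z (complex_of_real (herm_form Pos Neg z) + bilin b z + cnj (bilin b z)))
           \<and> (\<forall>d. homog_poly_zzbar f d \<longrightarrow> whomog_poly_zs F d)"
proof -
  define Qc where "Qc z = complex_of_real (herm_form Pos Neg z) + bilin b z + cnj (bilin b z)" for z
  obtain F0 where F0: "poly_zs F0" "\<And>z. f z = F0 z (Qc z)"
    using part1[OF assms(2,3,5,6)] unfolding Qc_def by blast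
  obtain S c where S: "finite S" "\<And>z s. F0 z s = (\<Sum>x\<in>S. c x * mono (fst x) z * s ^ (snd x))"
    using poly_zs_rep[OF F0(1)] by blast
  have fS: "f z = (\<Sum>x\<in>S. c x * mono (fst x) z * (Qc z) ^ (snd x))" for z
    using F0(2) S(2) by simp
  have Qeq: "Qc z = Qt Pos Neg b z (vconj z)" for z
    unfolding Qc_def Qt_real[OF assms(3)] Qc_eq ..
  have Qsc: "Qc (cvec (of_real t) z) = (of_real t)^2 * Qc z" for t z
    unfolding Qeq vconj_cvec_real Qt_cvec ..
  show ?thesis
  proof (cases "\<forall>z. f z = 0")
    case True
    show ?thesis
    proof (intro exI[of _ "\<lambda>z s. 0"] conjI allI impI)
      show "poly_zs (\<lambda>z s. 0 :: complex)" unfolding poly_zs_def by (intro exI[of _ "{}"]) auto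
      fix z show "f z = 0" using True by simp
    next
      fix d show "whomog_poly_zs (\<lambda>z s. 0 :: complex) d" unfolding whomog_poly_zs_def
        by (intro exI[of _ "{}"]) auto
    qed
  next
    case False
    then obtain z1 where z1: "f z1 \<noteq> 0" by blast
    show ?thesis
    proof (cases "\<exists>d. homog_poly_zzbar f d")
      case True
      then obtain d0 where d0: "homog_poly_zzbar f d0" by blast
      show ?thesis
      proof (intro exI[of _ "Fw S c d0"] conjI allI impI)
        show "poly_zs (Fw S c d0)" by (rule Fw_poly[OF S(1)])
        fix z show "f z = Fw S c d0 z (complex_of_real (herm_form Pos Neg z) + bilin b z + cnj (bilin b z))"
          using homog_part[OF S(1) fS Qsc d0] unfolding Qc_def by simp
      next
        fix d assume "homog_poly_zzbar f d"
        then have "d = d0" using homog_unique[OF _ d0 z1] by blast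
        then show "whomog_poly_zs (Fw S c d0) d" using Fw_whomog[OF S(1)] by simp
      qed
    next
      case False
      then show ?thesis using F0 unfolding Qc_def by blast
    qed
  qed
qed

end
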